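(* For every positive integer $k$, as formal power series in $q$, $$\sum_{n\ge1}\mathrm{spt}k_{do}(n)\,q^n=V_k(q)\,(-q^2;q^2)_\infty+W_k(q)\,(-q;q^2)_\infty+2(-q)^k(q^2;q^2)_{k-1},$$ where $V_1(q)=2q$, $V_k(q)=(q^{2k-1}-q)V_{k-1}(q)+2q^k$ for $k>1$, and $W_1(q)=q$, $W_k(q)=(q^{2k-1}-q)W_{k-1}(q)+q^{2k-1}$ for $k>1$.
   Context: For a partition $\pi$, $s(\pi)$ is its smallest part. $\mathrm{Spt}k_{do}(n)$ is the set of partitions $\pi$ of $n$ in which $s(\pi)$ occurs exactly $k$ times and the remaining parts (those larger than $s(\pi)$) are pairwise distinct and each has parity different from that of $s(\pi)$; $\mathrm{spt}k_{do}(n)=|\mathrm{Spt}k_{do}(n)|$. Notation: $(a;q)_0=1$, $(a;q)_n=\prod_{j=0}^{n-1}(1-aq^j)$, $(a;q)_\infty=\prod_{j\ge0}(1-aq^j)$. *)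

theory Defs
  imports "HOL-Computational_Algebra.Formal_Power_Series" "HOL-Library.Multiset"
begin

definition Sptk_do :: "nat \<Rightarrow> nat \<Rightarrow> nat multiset set" where
  "Sptk_do k n = {M. (\<forall>x\<in>#M. 0 < x) \<and> sum_mset M = n \<and> M \<noteq> {#} \<and>
      count M (Min (set_mset M)) = k \<and>
      (\<forall>x\<in>#M. x \<noteq> Min (set_mset M) \<longrightarrow>
          count M x = 1 \<and> x mod 2 \<noteq> Min (set_mset M) mod 2)}"

definition sptk_do :: "nat \<Rightarrow> nat \<Rightarrow> nat" where
  "sptk_do k n = card (Sptk_do k n)"

text \<open>Infinite product of formal power series, as the limit of the partial products
  in the standard (X-adic) metric topology on formal power series.\<close>
definition fps_infprod :: "(nat \<Rightarrow> int fps) \<Rightarrow> int fps" where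
  "fps_infprod f = lim (\<lambda>N. \<Prod>j<N. f j)"

fun V :: "nat \<Rightarrow> int fps" where
  "V 0 = 0"
| "V (Suc 0) = 2 * fps_X"
| "V (Suc (Suc k)) = (fps_X ^ (2 * (k + 2) - 1) - fps_X) * V (Suc k) + 2 * fps_X ^ (k + 2)"

fun W :: "nat \<Rightarrow> int fps" where
  "W 0 = 0"
| "W (Suc 0) = fps_X"
| "W (Suc (Suc k)) = (fps_X ^ (2 * (k + 2) - 1) - fps_X) * W (Suc k) + fps_X ^ (2 * (k + 2) - 1)"

end

theory Submission
  imports Defs
begin

unbundle fps_syntax



definition eqm :: "nat \<Rightarrow> int fps \<Rightarrow> int fps \<Rightarrow> bool" where
  "eqm N a b \<longleftrightarrow> fps_X ^ N dvd (a - b)"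

lemma X_pow_dvd_iff: "(fps_X ^ N dvd (g :: int fps)) \<longleftrightarrow> (\<forall>i<N. g $ i = 0)"
proof
  assume "fps_X ^ N dvd g"
  then obtain h where "g = fps_X ^ N * h" by (auto elim: dvdE)
  then show "\<forall>i<N. g $ i = 0" by (simp add: fps_X_power_mult_nth)
next
  assume H: "\<forall>i<N. g $ i = 0"
  have "g = fps_X ^ N * Abs_fps (\<lambda>i. g $ (i + N))"
    by (rule fps_ext) (simp add: fps_X_power_mult_nth H)
  then show "fps_X ^ N dvd g" by (metis dvd_triv_left)
qed

lemma eqm_refl[simp]: "eqm N a a" by (simp add: eqm_def)
lemma eqm_sym: "eqm N a b \<Longrightarrow> eqm N b a"
  unfolding eqm_def by (subst dvd_minus_iff[symmetric]) simp
lemma eqm_trans: "eqm N a b \<Longrightarrow> eqm N b c \<Longrightarrow> eqm N a c"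
  unfolding eqm_def
proof -
  assume "fps_X ^ N dvd a - b" "fps_X ^ N dvd b - c"
  then have "fps_X ^ N dvd (a - b) + (b - c)" by (rule dvd_add)
  then show "fps_X ^ N dvd a - c" by simp
qed
lemma eqm_add: "eqm N a b \<Longrightarrow> eqm N c d \<Longrightarrow> eqm N (a + c) (b + d)"
  unfolding eqm_def
proof -
  assume "fps_X ^ N dvd a - b" "fps_X ^ N dvd c - d"
  then have "fps_X ^ N dvd (a - b) + (c - d)" by (rule dvd_add)
  then show "fps_X ^ N dvd a + c - (b + d)" by (simp add: algebra_simps)
qed
lemma eqm_diff: "eqm N a b \<Longrightarrow> eqm N c d \<Longrightarrow> eqm N (a - c) (b - d)"
  unfolding eqm_def
proof -
  assume "fps_X ^ N dvd a - b" "fps_X ^ N dvd c - d"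
  then have "fps_X ^ N dvd (a - b) - (c - d)" by (rule dvd_diff)
  then show "fps_X ^ N dvd a - c - (b - d)" by (simp add: algebra_simps)
qed
lemma eqm_mult: "eqm N a b \<Longrightarrow> eqm N c d \<Longrightarrow> eqm N (a * c) (b * d)"
  unfolding eqm_def
proof -
  assume "fps_X ^ N dvd a - b" "fps_X ^ N dvd c - d"
  then have "fps_X ^ N dvd (a - b) * c + b * (c - d)" by (simp add: dvd_add)
  then show "fps_X ^ N dvd a * c - b * d" by (simp add: algebra_simps)
qed
lemma eqm_mono: "eqm N a b \<Longrightarrow> M \<le> N \<Longrightarrow> eqm M a b"
  unfolding eqm_def by (metis dvd_trans le_imp_power_dvd)
lemma eqm_zero: "N \<le> d \<Longrightarrow> eqm N (fps_X ^ d * c) 0"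
  unfolding eqm_def by (simp add: le_imp_power_dvd)
lemma eqm_nth: "eqm N a b \<Longrightarrow> i < N \<Longrightarrow> a $ i = b $ i"
  unfolding eqm_def X_pow_dvd_iff by auto
lemma eqm_cancelX: "eqm (Suc N) (fps_X * a) (fps_X * b) \<Longrightarrow> eqm N a b"
  unfolding eqm_def by (simp add: right_diff_distrib[symmetric])

lemma tele:
  fixes u b :: "'a::comm_ring_1" and T :: "nat \<Rightarrow> 'a"
  assumes "\<forall>m<M. T m = (1 + b * u ^ (m + 1)) * T (Suc m)"
  shows "b * (\<Sum>m<M. u ^ ((j + 1) * m) * T m) = (1 + b) * T 0
     + (u ^ j - 1) * (\<Sum>m<M. u ^ (j * m) * T m) - (u ^ (j * M) + b * u ^ ((j + 1) * M)) * T M"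
  using assms
proof (induction M)
  case 0
  then show ?case by (simp add: algebra_simps)
next
  case (Suc M)
  then have IH: "b * (\<Sum>m<M. u ^ ((j + 1) * m) * T m) = (1 + b) * T 0
     + (u ^ j - 1) * (\<Sum>m<M. u ^ (j * m) * T m) - (u ^ (j * M) + b * u ^ ((j + 1) * M)) * T M"
    and TM: "T M = (1 + b * u ^ (M + 1)) * T (Suc M)" by auto
  have e1: "u ^ ((j + 1) * M) = u ^ (j * M) * u ^ M" by (simp add: power_add algebra_simps)
  have e2: "u ^ (j * Suc M) = u ^ (j * M) * u ^ j" by (simp add: power_add algebra_simps)
  have e3: "u ^ ((j + 1) * Suc M) = u ^ (j * M) * u ^ M * u ^ j * u" by (simp add: power_add algebra_simps)
  define S1 where "S1 = (\<Sum>m<M. u ^ ((j + 1) * m) * T m)"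
  define S0 where "S0 = (\<Sum>m<M. u ^ (j * m) * T m)"
  define p where "p = u ^ (j * M)"
  have IH': "b * S1 = (1 + b) * T 0 + (u ^ j - 1) * S0 - (p + b * (p * u ^ M)) * ((1 + b * u ^ (M + 1)) * T (Suc M))"
    using IH unfolding S1_def S0_def p_def e1 TM .
  have "b * (\<Sum>m<Suc M. u ^ ((j + 1) * m) * T m) = b * S1 + b * (p * u ^ M) * ((1 + b * u ^ (M + 1)) * T (Suc M))"
  proof -
    have "(\<Sum>m<Suc M. u ^ ((j + 1) * m) * T m) = S1 + u ^ ((j + 1) * M) * T M"
      by (simp add: S1_def)
    then show ?thesis unfolding e1 TM p_def by (simp add: algebra_simps)
  qed
  also have "\<dots> = (1 + b) * T 0 + (u ^ j - 1) * (S0 + p * ((1 + b * u ^ (M + 1)) * T (Suc M)))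
      - (p * u ^ j + b * (p * u ^ M * u ^ j * u)) * T (Suc M)"
    unfolding IH' by (simp add: algebra_simps)
  also have "\<dots> = (1 + b) * T 0 + (u ^ j - 1) * (\<Sum>m<Suc M. u ^ (j * m) * T m) - (u ^ (j * Suc M) + b * u ^ ((j + 1) * Suc M)) * T (Suc M)"
    unfolding e2 e3 by (simp add: S0_def p_def TM)
  finally show ?case .
qed

definition T2 :: "nat \<Rightarrow> nat \<Rightarrow> int fps" where
  "T2 M m = (\<Prod>j\<in>{m..<M}. 1 + fps_X ^ (2 * j + 2))"
definition T1 :: "nat \<Rightarrow> nat \<Rightarrow> int fps" where
  "T1 M m = (\<Prod>j\<in>{Suc m..<Suc M}. 1 + fps_X ^ (2 * j + 1))"
definition P2 :: "nat \<Rightarrow> int fps" where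
  "P2 N = (\<Prod>j<N. 1 + fps_X ^ (2 * j + 2))"
definition P1 :: "nat \<Rightarrow> int fps" where
  "P1 N = (\<Prod>j<N. 1 + fps_X ^ (2 * j + 1))"
definition Sg2 :: "nat \<Rightarrow> nat \<Rightarrow> int fps" where
  "Sg2 M j = (\<Sum>m<M. (fps_X ^ 2) ^ (j * m) * T2 M m)"
definition Sg1 :: "nat \<Rightarrow> nat \<Rightarrow> int fps" where
  "Sg1 M j = (\<Sum>m<M. (fps_X ^ 2) ^ (j * m) * T1 M m)"
definition Od :: "nat \<Rightarrow> nat \<Rightarrow> int fps" where
  "Od k M = (\<Sum>m<M. fps_X ^ (k * (2 * m + 1)) * T2 M m)"
definition Ev :: "nat \<Rightarrow> nat \<Rightarrow> int fps" where
  "Ev k M = (\<Sum>m<M. fps_X ^ (k * (2 * m + 2)) * T1 M m)"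

fun c :: "nat \<Rightarrow> int fps" where
  "c 0 = 0"
| "c (Suc 0) = - fps_X"
| "c (Suc (Suc k)) = (fps_X ^ (2 * (k + 2) - 1) - fps_X) * c (Suc k)"

lemma pow2: "((fps_X :: int fps) ^ 2) ^ n = fps_X ^ (2 * n)" by (simp add: power_mult)

lemma T2_rec: "m < M \<Longrightarrow> T2 M m = (1 + 1 * (fps_X ^ 2) ^ (m + 1)) * T2 M (Suc m)"
proof -
  assume "m < M"
  then have "T2 M m = (1 + fps_X ^ (2 * m + 2)) * T2 M (Suc m)"
    unfolding T2_def by (rule prod.atLeast_Suc_lessThan)
  moreover have "2 * (m + 1) = 2 * m + 2" by simp
  ultimately show ?thesis by (simp only: pow2 mult_1)
qed
lemma T1_rec: "m < M \<Longrightarrow> T1 M m = (1 + fps_X * (fps_X ^ 2) ^ (m + 1)) * T1 M (Suc m)"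
proof -
  assume "m < M"
  then have "T1 M m = (1 + fps_X ^ (2 * Suc m + 1)) * T1 M (Suc m)"
    unfolding T1_def by (subst prod.atLeast_Suc_lessThan) auto
  moreover have "fps_X * (fps_X ^ 2) ^ (m + 1) = (fps_X ^ (2 * Suc m + 1) :: int fps)"
    unfolding pow2 by (simp add: power_Suc[symmetric] del: power_Suc)
  ultimately show ?thesis by simp
qed
lemma T2_M[simp]: "T2 M M = 1" by (simp add: T2_def)
lemma T1_M[simp]: "T1 M M = 1" by (simp add: T1_def)
lemma T2_0: "T2 M 0 = P2 M" by (simp add: T2_def P2_def atLeast0LessThan)
lemma T1_0: "(1 + fps_X) * T1 M 0 = P1 (Suc M)"
proof -
  have "P1 (Suc M) = (\<Prod>j\<in>{0..<Suc M}. 1 + fps_X ^ (2 * j + 1))" by (simp add: P1_def atLeast0LessThan)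
  also have "\<dots> = (1 + fps_X) * T1 M 0" by (subst prod.atLeast_Suc_lessThan) (auto simp: T1_def)
  finally show ?thesis by simp
qed

lemma Od_Sg: "Od k M = fps_X ^ k * Sg2 M k"
  unfolding Od_def Sg2_def sum_distrib_left
  by (rule sum.cong) (simp_all add: power_mult[symmetric] power_add[symmetric] algebra_simps)
lemma Ev_Sg: "Ev k M = (fps_X ^ 2) ^ k * Sg1 M k"
  unfolding Ev_def Sg1_def sum_distrib_left
  by (rule sum.cong) (simp_all add: power_mult[symmetric] power_add[symmetric] algebra_simps)

lemma Sg2_rec: "Sg2 M (Suc j) = 2 * P2 M + ((fps_X ^ 2) ^ j - 1) * Sg2 M j
   - ((fps_X ^ 2) ^ (j * M) + (fps_X ^ 2) ^ ((j + 1) * M))"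
proof -
  have "1 * Sg2 M (Suc j) = (1 + 1) * T2 M 0 + ((fps_X ^ 2) ^ j - 1) * Sg2 M j
     - ((fps_X ^ 2) ^ (j * M) + 1 * (fps_X ^ 2) ^ ((j + 1) * M)) * T2 M M"
  proof -
    have "\<forall>m<M. T2 M m = (1 + 1 * (fps_X ^ 2) ^ (m + 1)) * T2 M (Suc m)" using T2_rec by blast
    from tele[OF this, of j] show ?thesis unfolding Sg2_def by simp
  qed
  then show ?thesis by (simp add: T2_0)
qed

lemma Sg1_rec: "fps_X * Sg1 M (Suc j) = P1 (Suc M) + ((fps_X ^ 2) ^ j - 1) * Sg1 M j
   - ((fps_X ^ 2) ^ (j * M) + fps_X * (fps_X ^ 2) ^ ((j + 1) * M))"
proof -
  have "fps_X * Sg1 M (Suc j) = (1 + fps_X) * T1 M 0 + ((fps_X ^ 2) ^ j - 1) * Sg1 M j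
     - ((fps_X ^ 2) ^ (j * M) + fps_X * (fps_X ^ 2) ^ ((j + 1) * M)) * T1 M M"
  proof -
    have "\<forall>m<M. T1 M m = (1 + fps_X * (fps_X ^ 2) ^ (m + 1)) * T1 M (Suc m)" using T1_rec by blast
    from tele[OF this, of j] show ?thesis unfolding Sg1_def by simp
  qed
  then show ?thesis by (simp add: T1_0)
qed




lemma eqmI: "a = b + fps_X ^ d * e \<Longrightarrow> N \<le> d \<Longrightarrow> eqm N a b"
  unfolding eqm_def by (simp add: le_imp_power_dvd dvd_mult2)

lemma ring_aux1:
  fixes x :: "'a::comm_ring_1"
  shows "(y * x) * (2 * P + (z - 1) * A - (w * p + w * q)) = 2 * (y * x) * P + (z * x - x) * (y * A) + w * (- (y * x) * (p + q))"
  by (simp add: algebra_simps)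

lemma Od_eqm: "eqm (2 * M) (Od (Suc j) M) (V (Suc j) * P2 M + c (Suc j))"
proof (induction j)
  case 0
  have S: "Sg2 M 1 = 2 * P2 M - (1 + fps_X ^ (2 * M))"
    using Sg2_rec[of M 0] by (simp add: pow2)
  have "Od (Suc 0) M = fps_X * Sg2 M 1" by (simp add: Od_Sg)
  also have "\<dots> = 2 * fps_X * P2 M - fps_X + fps_X ^ (2 * M) * (- fps_X)"
    unfolding S by (simp add: algebra_simps)
  finally have "Od (Suc 0) M = (V (Suc 0) * P2 M + c (Suc 0)) + fps_X ^ (2 * M) * (- fps_X)"
    by simp
  then show ?case by (rule eqmI) simp
next
  case (Suc j)
  define x :: "int fps" where "x = fps_X"
  define u :: "int fps" where "u = x ^ 2"
  have e1: "u ^ (Suc j * M) = x ^ (2 * M) * u ^ (j * M)"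
  proof -
    have "u ^ (Suc j * M) = u ^ (M + j * M)" by simp
    also have "\<dots> = u ^ M * u ^ (j * M)" by (rule power_add)
    finally show ?thesis unfolding u_def by (simp add: power_mult)
  qed
  have e2: "u ^ ((Suc j + 1) * M) = x ^ (2 * M) * u ^ ((j + 1) * M)"
  proof -
    have "u ^ ((Suc j + 1) * M) = u ^ (M + (j + 1) * M)" by simp
    also have "\<dots> = u ^ M * u ^ ((j + 1) * M)" by (rule power_add)
    finally show ?thesis unfolding u_def by (simp add: power_mult)
  qed
  have e3: "u ^ Suc j = x ^ (2 * j + 2)" unfolding u_def power_mult[symmetric] by simp
  have B: "Sg2 M (Suc (Suc j)) = 2 * P2 M + (x ^ (2 * j + 2) - 1) * Sg2 M (Suc j)
     - (x ^ (2 * M) * u ^ (j * M) + x ^ (2 * M) * u ^ ((j + 1) * M))"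
    using Sg2_rec[of M "Suc j"] unfolding x_def[symmetric] u_def[symmetric] e1 e2 e3 by simp
  have "Od (Suc (Suc j)) M = (x ^ Suc j * x) * Sg2 M (Suc (Suc j))"
    by (simp add: Od_Sg x_def)
  also have "\<dots> = 2 * (x ^ Suc j * x) * P2 M + (x ^ (2 * j + 2) * x - x) * (x ^ Suc j * Sg2 M (Suc j))
     + x ^ (2 * M) * (- (x ^ Suc j * x) * (u ^ (j * M) + u ^ ((j + 1) * M)))"
    unfolding B by (rule ring_aux1)
  finally have O0: "Od (Suc (Suc j)) M = 2 * (x ^ Suc j * x) * P2 M + (x ^ (2 * j + 2) * x - x) * (x ^ Suc j * Sg2 M (Suc j))
     + x ^ (2 * M) * (- (x ^ Suc j * x) * (u ^ (j * M) + u ^ ((j + 1) * M)))" .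
  have f1: "x ^ (2 * j + 2) * x = x ^ (2 * j + 3)"
    by (simp only: power_Suc2[symmetric]) (simp add: eval_nat_numeral)
  have f2: "x ^ Suc j * x = x ^ (j + 2)"
    by (simp only: power_Suc2[symmetric]) (simp add: eval_nat_numeral)
  have f3: "x ^ Suc j * Sg2 M (Suc j) = Od (Suc j) M" by (simp add: Od_Sg x_def)
  have O: "Od (Suc (Suc j)) M = 2 * x ^ (j + 2) * P2 M + (x ^ (2 * j + 3) - x) * Od (Suc j) M
     + x ^ (2 * M) * (- (x ^ (j + 2)) * (u ^ (j * M) + u ^ ((j + 1) * M)))"
    using O0 unfolding f1 f2 f3 .
  note O = O[unfolded x_def]
  have "eqm (2 * M) (Od (Suc (Suc j)) M) (2 * fps_X ^ (j + 2) * P2 M + (fps_X ^ (2 * j + 3) - fps_X) * Od (Suc j) M)"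
    by (rule eqmI[OF O order_refl])
  moreover have "eqm (2 * M) (2 * fps_X ^ (j + 2) * P2 M + (fps_X ^ (2 * j + 3) - fps_X) * Od (Suc j) M)
      (2 * fps_X ^ (j + 2) * P2 M + (fps_X ^ (2 * j + 3) - fps_X) * (V (Suc j) * P2 M + c (Suc j)))"
    by (intro eqm_add eqm_mult Suc eqm_refl)
  moreover have "2 * fps_X ^ (j + 2) * P2 M + (fps_X ^ (2 * j + 3) - fps_X) * (V (Suc j) * P2 M + c (Suc j))
      = V (Suc (Suc j)) * P2 M + c (Suc (Suc j))"
  proof -
    have ex: "2 * (j + 2) - 1 = 2 * j + 3" by simp
    show ?thesis unfolding V.simps c.simps ex by (simp add: algebra_simps)
  qed
  ultimately show ?case by (metis eqm_trans)
qed

lemma ring_aux2: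
  fixes x :: "'a::comm_ring_1"
  shows "(z * x * x) * (P + (z - 1) * A - (w * p + x * (w * q))) =
     x * (z * x * P + (z * x - x) * (z * A)) + (w * x) * (- (z * x) * (p + x * q))"
  by (simp add: algebra_simps)

lemma Ev_eqm: "eqm (2 * M) (Ev (Suc j) M) (W (Suc j) * P1 (Suc M) + c (Suc j))"
proof (induction j)
  case 0
  have S: "fps_X * Sg1 M 1 = P1 (Suc M) - (1 + fps_X * fps_X ^ (2 * M))"
    using Sg1_rec[of M 0] by (simp add: pow2)
  have "fps_X * Ev (Suc 0) M = fps_X ^ 2 * (fps_X * Sg1 M 1)" by (simp add: Ev_Sg algebra_simps)
  also have "\<dots> = fps_X * (W (Suc 0) * P1 (Suc M) + c (Suc 0)) + fps_X ^ Suc (2 * M) * (- (fps_X ^ 2))"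
    unfolding S by (simp add: algebra_simps power2_eq_square)
  finally have "eqm (Suc (2 * M)) (fps_X * Ev (Suc 0) M) (fps_X * (W (Suc 0) * P1 (Suc M) + c (Suc 0)))"
    by (rule eqmI) simp
  then show ?case by (rule eqm_cancelX)
next
  case (Suc j)
  define x :: "int fps" where "x = fps_X"
  define u :: "int fps" where "u = x ^ 2"
  define z where "z = u ^ Suc j"
  have e1: "u ^ (Suc j * M) = x ^ (2 * M) * u ^ (j * M)"
  proof -
    have "u ^ (Suc j * M) = u ^ (M + j * M)" by simp
    also have "\<dots> = u ^ M * u ^ (j * M)" by (rule power_add)
    finally show ?thesis unfolding u_def by (simp add: power_mult)
  qed
  have e2: "u ^ ((Suc j + 1) * M) = x ^ (2 * M) * u ^ ((j + 1) * M)"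
  proof -
    have "u ^ ((Suc j + 1) * M) = u ^ (M + (j + 1) * M)" by simp
    also have "\<dots> = u ^ M * u ^ ((j + 1) * M)" by (rule power_add)
    finally show ?thesis unfolding u_def by (simp add: power_mult)
  qed
  have B: "fps_X * Sg1 M (Suc (Suc j)) = P1 (Suc M) + (z - 1) * Sg1 M (Suc j)
     - (x ^ (2 * M) * u ^ (j * M) + x * (x ^ (2 * M) * u ^ ((j + 1) * M)))"
    using Sg1_rec[of M "Suc j"] unfolding x_def[symmetric] u_def[symmetric] e1 e2 z_def by simp
  have zx: "z * x = fps_X ^ (2 * j + 3)"
  proof -
    have "z = x ^ (2 * j + 2)" unfolding z_def u_def power_mult[symmetric] by simp
    then have "z * x = x ^ Suc (2 * j + 2)" by (simp only: power_Suc2)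
    then show ?thesis by (simp add: x_def eval_nat_numeral)
  qed
  have zA: "z * Sg1 M (Suc j) = Ev (Suc j) M" unfolding z_def u_def x_def by (simp add: Ev_Sg)
  have "fps_X * Ev (Suc (Suc j)) M = (z * x * x) * (fps_X * Sg1 M (Suc (Suc j)))"
    unfolding z_def u_def x_def by (simp add: Ev_Sg algebra_simps power2_eq_square)
  also have "\<dots> = x * (z * x * P1 (Suc M) + (z * x - x) * (z * Sg1 M (Suc j)))
      + (x ^ (2 * M) * x) * (- (z * x) * (u ^ (j * M) + x * u ^ ((j + 1) * M)))"
    unfolding B by (rule ring_aux2)
  finally have O: "fps_X * Ev (Suc (Suc j)) M = fps_X * (fps_X ^ (2 * j + 3) * P1 (Suc M) + (fps_X ^ (2 * j + 3) - fps_X) * Ev (Suc j) M)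
      + fps_X ^ Suc (2 * M) * (- (z * x) * (u ^ (j * M) + x * u ^ ((j + 1) * M)))"
    unfolding zx zA by (simp add: x_def algebra_simps)
  have "eqm (2 * M) (Ev (Suc (Suc j)) M) (fps_X ^ (2 * j + 3) * P1 (Suc M) + (fps_X ^ (2 * j + 3) - fps_X) * Ev (Suc j) M)"
    by (rule eqm_cancelX, rule eqmI[OF O order_refl])
  moreover have "eqm (2 * M) (fps_X ^ (2 * j + 3) * P1 (Suc M) + (fps_X ^ (2 * j + 3) - fps_X) * Ev (Suc j) M)
      (fps_X ^ (2 * j + 3) * P1 (Suc M) + (fps_X ^ (2 * j + 3) - fps_X) * (W (Suc j) * P1 (Suc M) + c (Suc j)))"
    by (intro eqm_add eqm_mult Suc eqm_refl)
  moreover have "fps_X ^ (2 * j + 3) * P1 (Suc M) + (fps_X ^ (2 * j + 3) - fps_X) * (W (Suc j) * P1 (Suc M) + c (Suc j))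
      = W (Suc (Suc j)) * P1 (Suc M) + c (Suc (Suc j))"
  proof -
    have ex: "2 * (j + 2) - 1 = 2 * j + 3" by simp
    show ?thesis unfolding W.simps c.simps ex by (simp add: algebra_simps)
  qed
  ultimately show ?case by (metis eqm_trans)
qed





lemma prod_coeff:
  assumes "finite A"
  shows "(\<Prod>t\<in>A. 1 + fps_X ^ t :: int fps) $ i = int (card {D. D \<subseteq> A \<and> \<Sum>D = i})"
  using assms
proof (induction A arbitrary: i rule: finite_induct)
  case empty
  have "{D. D \<subseteq> {} \<and> \<Sum>D = i} = (if i = 0 then {{}} else {})" by auto
  then show ?case by simp
next
  case (insert a A)
  let ?S = "\<lambda>i. {D. D \<subseteq> A \<and> \<Sum>D = i}"
  have fin: "finite (?S j)" for j using insert(1) by (rule rev_finite_subset[OF finite_Pow_iff[THEN iffD2]]) auto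
  have eq: "{D. D \<subseteq> insert a A \<and> \<Sum>D = i} = ?S i \<union> insert a ` {D. D \<subseteq> A \<and> \<Sum>D + a = i}"
  proof (intro equalityI subsetI)
    fix D assume D: "D \<in> {D. D \<subseteq> insert a A \<and> \<Sum>D = i}"
    then have fD: "finite D" using insert(1) finite_subset by blast
    show "D \<in> ?S i \<union> insert a ` {D. D \<subseteq> A \<and> \<Sum>D + a = i}"
    proof (cases "a \<in> D")
      case True
      then have "D = insert a (D - {a})" by auto
      moreover have "\<Sum>(D - {a}) + a = i" using D True fD by (simp add: sum.remove)
      moreover have "D - {a} \<subseteq> A" using D by auto
      ultimately show ?thesis by blast
    next
      case False
      then show ?thesis using D by auto
    qed
  next
    fix D assume "D \<in> ?S i \<union> insert a ` {D. D \<subseteq> A \<and> \<Sum>D + a = i}"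
    then show "D \<in> {D. D \<subseteq> insert a A \<and> \<Sum>D = i}"
    proof
      assume "D \<in> ?S i" then show ?thesis by auto
    next
      assume "D \<in> insert a ` {D. D \<subseteq> A \<and> \<Sum>D + a = i}"
      then obtain E where E: "E \<subseteq> A" "\<Sum>E + a = i" "D = insert a E" by auto
      have "finite E" using E(1) insert(1) finite_subset by blast
      moreover have "a \<notin> E" using E(1) insert(2) by auto
      ultimately show ?thesis using E by auto
    qed
  qed
  have disj: "?S i \<inter> insert a ` {D. D \<subseteq> A \<and> \<Sum>D + a = i} = {}" using insert(2) by auto
  have inj: "inj_on (insert a) {D. D \<subseteq> A \<and> \<Sum>D + a = i}"
    using insert(2) by (intro inj_onI) (metis insert_absorb insert_ident mem_Collect_eq subset_iff)
  have T: "{D. D \<subseteq> A \<and> \<Sum>D + a = i} = (if i < a then {} else ?S (i - a))" by auto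
  have finT: "finite {D. D \<subseteq> A \<and> \<Sum>D + a = i}" unfolding T using fin by simp
  have "card {D. D \<subseteq> insert a A \<and> \<Sum>D = i} = card (?S i) + card {D. D \<subseteq> A \<and> \<Sum>D + a = i}"
    unfolding eq using disj fin finT by (simp add: card_Un_disjoint card_image[OF inj])
  moreover have "(\<Prod>t\<in>insert a A. 1 + fps_X ^ t :: int fps) $ i
      = (\<Prod>t\<in>A. 1 + fps_X ^ t :: int fps) $ i + (fps_X ^ a * (\<Prod>t\<in>A. 1 + fps_X ^ t :: int fps)) $ i"
    using insert(1,2) by (simp add: algebra_simps)
  ultimately show ?case
    unfolding fps_X_power_mult_nth insert(3) T by auto
qed

lemma sum_mset_mset_set: "sum_mset (mset_set (D :: nat set)) = \<Sum>D"
  using sum_unfold_sum_mset[of "\<lambda>x. x" D] by simp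

definition Apart :: "nat \<Rightarrow> nat \<Rightarrow> nat set" where
  "Apart M s = {t. s < t \<and> t \<le> 2 * M + 1 \<and> t mod 2 \<noteq> s mod 2}"
definition FF :: "nat \<Rightarrow> nat \<Rightarrow> nat \<Rightarrow> nat \<Rightarrow> nat set set" where
  "FF k n M s = {D. D \<subseteq> Apart M s \<and> k * s + \<Sum>D = n}"

lemma finite_Apart[simp]: "finite (Apart M s)"
  unfolding Apart_def by (rule finite_subset[of _ "{..2 * M + 1}"]) auto

lemma card_Spt:
  assumes k: "1 \<le> k" and nM: "n \<le> 2 * M"
  shows "sptk_do k n = card (Sigma {1..2 * M} (FF k n M))"
proof -
  define f where "f = (\<lambda>(s, D). replicate_mset k s + mset_set (D :: nat set))"
  define g where "g = (\<lambda>N :: nat multiset. (Min (set_mset N), set_mset N - {Min (set_mset N)}))"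
  have key: "set_mset (f (s, D)) = insert s D \<and> Min (set_mset (f (s, D))) = s \<and> count (f (s, D)) s = k
      \<and> (\<forall>x. x \<noteq> s \<longrightarrow> count (f (s, D)) x = (if x \<in> D then 1 else 0))
      \<and> sum_mset (f (s, D)) = k * s + \<Sum>D"
    if "(s, D) \<in> Sigma {1..2 * M} (FF k n M)" for s D
  proof -
    from that have D: "D \<subseteq> Apart M s" "k * s + \<Sum>D = n" and s: "1 \<le> s" by (auto simp: FF_def)
    have fD: "finite D" using D(1) finite_Apart by (rule finite_subset)
    have gt: "\<forall>t\<in>D. s < t" using D(1) by (auto simp: Apart_def)
    have sD: "s \<notin> D" using gt by auto
    have set: "set_mset (f (s, D)) = insert s D" using k fD by (auto simp: f_def)
    have mn: "Min (insert s D) = s" using fD gt by (intro Min_eqI) auto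
    have c1: "count (f (s, D)) s = k" using sD by (simp add: f_def count_mset_set')
    have c2: "\<forall>x. x \<noteq> s \<longrightarrow> count (f (s, D)) x = (if x \<in> D then 1 else 0)"
      using fD by (simp add: f_def count_mset_set')
    have c3: "sum_mset (f (s, D)) = k * s + \<Sum>D" by (simp add: f_def sum_mset_mset_set)
    show ?thesis using set mn c1 c2 c3 by simp
  qed
  have bij: "bij_betw f (Sigma {1..2 * M} (FF k n M)) (Sptk_do k n)"
  proof (rule bij_betw_byWitness[where f' = g])
    show "\<forall>a\<in>Sigma {1..2 * M} (FF k n M). g (f a) = a"
    proof
      fix a assume a: "a \<in> Sigma {1..2 * M} (FF k n M)"
      obtain s D where sD: "a = (s, D)" by (cases a)
      have "s \<notin> D" using a sD by (auto simp: FF_def Apart_def)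
      then show "g (f a) = a" using key[of s D] a sD by (auto simp: g_def)
    qed
    show "f ` Sigma {1..2 * M} (FF k n M) \<subseteq> Sptk_do k n"
    proof
      fix b assume "b \<in> f ` Sigma {1..2 * M} (FF k n M)"
      then obtain s D where a: "(s, D) \<in> Sigma {1..2 * M} (FF k n M)" and b: "b = f (s, D)" by auto
      from a have D: "D \<subseteq> Apart M s" "k * s + \<Sum>D = n" and s: "1 \<le> s" by (auto simp: FF_def)
      note K = key[OF a]
      have setb: "set_mset b = insert s D" unfolding b using K by blast
      have minb: "Min (set_mset b) = s" unfolding b using K by blast
      have cb: "count b s = k" unfolding b using K by blast
      have cx: "\<And>x. x \<noteq> s \<Longrightarrow> count b x = (if x \<in> D then 1 else 0)" unfolding b using K by blast
      have sumb: "sum_mset b = n" using K b D(2) by simp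
      have DA: "\<And>t. t \<in> D \<Longrightarrow> s < t \<and> t mod 2 \<noteq> s mod 2" using D(1) unfolding Apart_def by blast
      have pos: "\<forall>x\<in>#b. 0 < x"
      proof
        fix x assume "x \<in># b"
        then have "x = s \<or> x \<in> D" using setb by blast
        then show "0 < x" using s DA by fastforce
      qed
      have ne: "b \<noteq> {#}" using setb by auto
      have oth: "\<forall>x\<in>#b. x \<noteq> Min (set_mset b) \<longrightarrow> count b x = 1 \<and> x mod 2 \<noteq> Min (set_mset b) mod 2"
      proof (intro ballI impI)
        fix x assume x: "x \<in># b" "x \<noteq> Min (set_mset b)"
        then have xs: "x \<noteq> s" using minb by simp
        then have xD: "x \<in> D" using x(1) setb by blast
        show "count b x = 1 \<and> x mod 2 \<noteq> Min (set_mset b) mod 2"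
          using cx[OF xs] xD DA[OF xD] minb by simp
      qed
      show "b \<in> Sptk_do k n" unfolding Sptk_do_def mem_Collect_eq minb
        using pos sumb ne cb oth[unfolded minb] by blast
    qed
    show "\<forall>b\<in>Sptk_do k n. f (g b) = b"
    proof
      fix b assume b: "b \<in> Sptk_do k n"
      define s where "s = Min (set_mset b)"
      from b have cs: "count b s = k" and oth: "\<forall>x\<in>#b. x \<noteq> s \<longrightarrow> count b x = 1"
        by (auto simp: Sptk_do_def s_def)
      have fin: "finite (set_mset b - {s})" by simp
      have fg: "f (g b) = replicate_mset k s + mset_set (set_mset b - {s})" by (simp add: f_def g_def s_def)
      show "f (g b) = b"
        unfolding fg
      proof (intro multiset_eqI)
        fix x
        show "count (replicate_mset k s + mset_set (set_mset b - {s})) x = count b x"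
          using cs oth fin by (cases "x = s") (auto simp: count_mset_set' not_in_iff)
      qed
    qed
    show "g ` Sptk_do k n \<subseteq> Sigma {1..2 * M} (FF k n M)"
    proof
      fix a assume "a \<in> g ` Sptk_do k n"
      then obtain b where b: "b \<in> Sptk_do k n" and a: "a = g b" by auto
      define s where "s = Min (set_mset b)"
      define D where "D = set_mset b - {s}"
      from b have pos: "\<forall>x\<in>#b. 0 < x" and sum: "sum_mset b = n" and ne: "b \<noteq> {#}"
        and cs: "count b s = k"
        and oth: "\<forall>x\<in>#b. x \<noteq> s \<longrightarrow> count b x = 1 \<and> x mod 2 \<noteq> s mod 2"
        by (auto simp: Sptk_do_def s_def)
      have sin: "s \<in># b" unfolding s_def using ne by (simp add: Min_in)
      have fD: "finite D" by (simp add: D_def)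
      have beq: "b = replicate_mset k s + mset_set D"
      proof (intro multiset_eqI)
        fix x
        show "count b x = count (replicate_mset k s + mset_set D) x"
          using cs oth fD by (cases "x = s") (auto simp: count_mset_set' not_in_iff D_def)
      qed
      have sumeq: "k * s + \<Sum>D = n"
        using arg_cong[OF beq, of sum_mset] sum by (simp add: sum_mset_mset_set)
      have s1: "1 \<le> s" using pos sin by auto
      have "s \<le> k * s" using k by simp
      then have s2: "s \<le> 2 * M" using sumeq nM by linarith
      have DA: "D \<subseteq> Apart M s"
      proof
        fix t assume t: "t \<in> D"
        then have tb: "t \<in># b" "t \<noteq> s" by (auto simp: D_def)
        have "s \<le> t" unfolding s_def using tb by simp
        moreover have "t \<le> \<Sum>D" using t fD by (intro member_le_sum) auto
        ultimately show "t \<in> Apart M s" using tb oth sumeq nM unfolding Apart_def by auto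
      qed
      show "a \<in> Sigma {1..2 * M} (FF k n M)"
        unfolding a g_def s_def[symmetric] D_def[symmetric] using s1 s2 DA sumeq by (auto simp: FF_def)
    qed
  qed
  then show ?thesis unfolding sptk_do_def by (simp add: bij_betw_same_card)
qed





lemma sum_split_parity:
  fixes f :: "nat \<Rightarrow> 'a::comm_monoid_add"
  shows "(\<Sum>s\<in>{1..2 * M}. f s) = (\<Sum>m<M. f (2 * m + 1) + f (2 * m + 2))"
proof (induction M)
  case 0 then show ?case by simp
next
  case (Suc M)
  have "{1..2 * Suc M} = insert (2 * M + 2) (insert (2 * M + 1) {1..2 * M})" by auto
  then have "(\<Sum>s\<in>{1..2 * Suc M}. f s) = f (2 * M + 2) + (f (2 * M + 1) + (\<Sum>s\<in>{1..2 * M}. f s))"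
    by simp
  then show ?case using Suc by (simp add: algebra_simps)
qed

lemma Apart_odd: "Apart M (2 * m + 1) = (\<lambda>j. 2 * j + 2) ` {m..<M}"
proof (intro equalityI subsetI)
  fix t assume t: "t \<in> Apart M (2 * m + 1)"
  then have t1: "2 * m + 1 < t" "t \<le> 2 * M + 1" "even t" unfolding Apart_def by auto
  have "t = 2 * (t div 2 - 1) + 2" "t div 2 - 1 \<in> {m..<M}" using t1 by (auto elim!: evenE)
  then show "t \<in> (\<lambda>j. 2 * j + 2) ` {m..<M}" by blast
qed (auto simp: Apart_def)

lemma Apart_even: "Apart M (2 * m + 2) = (\<lambda>j. 2 * j + 1) ` {Suc m..<Suc M}"
proof (intro equalityI subsetI)
  fix t assume t: "t \<in> Apart M (2 * m + 2)"
  then have t1: "2 * m + 2 < t" "t \<le> 2 * M + 1" "odd t" unfolding Apart_def by auto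
  have "t = 2 * (t div 2) + 1" "t div 2 \<in> {Suc m..<Suc M}" using t1 by (auto elim!: oddE)
  then show "t \<in> (\<lambda>j. 2 * j + 1) ` {Suc m..<Suc M}" by blast
qed (auto simp: Apart_def)

lemma T2_Apart: "T2 M m = (\<Prod>t\<in>Apart M (2 * m + 1). 1 + fps_X ^ t)"
  unfolding Apart_odd T2_def by (subst prod.reindex) (auto simp: inj_on_def)
lemma T1_Apart: "T1 M m = (\<Prod>t\<in>Apart M (2 * m + 2). 1 + fps_X ^ t)"
  unfolding Apart_even T1_def by (subst prod.reindex) (auto simp: inj_on_def)

lemma OdEv_sum: "Od k M + Ev k M = (\<Sum>s\<in>{1..2 * M}. fps_X ^ (k * s) * (\<Prod>t\<in>Apart M s. 1 + fps_X ^ t))"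
  unfolding sum_split_parity Od_def Ev_def T2_Apart T1_Apart sum.distrib ..

lemma coeff_OdEv:
  assumes "n \<le> 2 * M"
  shows "(Od k M + Ev k M) $ n = int (card (Sigma {1..2 * M} (FF k n M)))"
proof -
  have fin: "finite (FF k n M s)" for s
    by (rule finite_subset[of _ "Pow (Apart M s)"]) (auto simp: FF_def)
  have one: "(fps_X ^ (k * s) * (\<Prod>t\<in>Apart M s. 1 + fps_X ^ t)) $ n = int (card (FF k n M s))" for s
  proof (cases "n < k * s")
    case True
    then have "FF k n M s = {}" by (auto simp: FF_def)
    then show ?thesis using True by (simp add: fps_X_power_mult_nth)
  next
    case False
    then have "FF k n M s = {D. D \<subseteq> Apart M s \<and> \<Sum>D = n - k * s}" by (auto simp: FF_def)
    then show ?thesis using False by (simp add: fps_X_power_mult_nth prod_coeff)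
  qed
  show ?thesis unfolding OdEv_sum fps_sum_nth one using fin by (simp add: card_SigmaI)
qed





lemma infprod_coeff:
  fixes e :: "nat \<Rightarrow> nat"
  assumes e: "\<And>j. Suc j \<le> e j" and iN: "i \<le> N"
  shows "(\<Prod>j<N. 1 + fps_X ^ (e j) :: int fps) $ i = fps_infprod (\<lambda>j. 1 + fps_X ^ (e j)) $ i"
proof -
  define P where "P = (\<lambda>N. (\<Prod>j<N. 1 + fps_X ^ (e j) :: int fps))"
  have stab: "P N $ i = P i $ i" if "i \<le> N" for N i
    using that
  proof (induction N rule: dec_induct)
    case base then show ?case by simp
  next
    case (step N)
    have "P (Suc N) = P N + fps_X ^ (e N) * P N" by (simp add: P_def algebra_simps)
    moreover have "i < e N" using step(1) e[of N] by simp
    ultimately have "P (Suc N) $ i = P N $ i" by (simp add: fps_X_power_mult_nth)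
    then show ?case using step(3) by simp
  qed
  define L where "L = Abs_fps (\<lambda>i. P i $ i)"
  have "P \<longlonglongrightarrow> L"
  proof (rule tendsto_fpsI)
    fix i
    show "eventually (\<lambda>N. P N $ i = L $ i) sequentially"
    proof (rule eventually_sequentiallyI[of i])
      fix N assume "i \<le> N"
      then show "P N $ i = L $ i" unfolding L_def fps_nth_Abs_fps by (rule stab)
    qed
  qed
  then have "lim P = L" by (rule limI)
  then have "fps_infprod (\<lambda>j. 1 + fps_X ^ (e j)) = L" by (simp add: fps_infprod_def P_def)
  then show ?thesis using stab[OF iN] by (simp add: P_def L_def)
qed

lemma ring_aux3:
  fixes y :: "'a::comm_ring_1"
  shows "(y * (1 - z)) * (y ^ Suc j * Q) = y ^ Suc (Suc j) * (Q * (1 - z))"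
  by (simp add: algebra_simps)

lemma ring_aux4:
  fixes x :: "'a::comm_ring_1"
  shows "x * a - x = (- x) * (1 - a)"
  by (simp add: algebra_simps)

lemma c_closed: "c (Suc j) = (- fps_X) ^ Suc j * (\<Prod>i<j. 1 - fps_X ^ (2 * i + 2))"
proof (induction j)
  case 0 then show ?case by simp
next
  case (Suc j)
  have ex: "2 * (j + 2) - 1 = Suc (2 * j + 2)" by simp
  have ab: "(fps_X ^ Suc (2 * j + 2) - fps_X :: int fps) = (- fps_X) * (1 - fps_X ^ (2 * j + 2))"
    unfolding power_Suc by (rule ring_aux4)
  have "c (Suc (Suc j)) = (fps_X ^ Suc (2 * j + 2) - fps_X) * c (Suc j)" unfolding c.simps ex ..
  also have "\<dots> = ((- fps_X) * (1 - fps_X ^ (2 * j + 2))) * ((- fps_X) ^ Suc j * (\<Prod>i<j. 1 - fps_X ^ (2 * i + 2)))"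
    unfolding ab Suc ..
  also have "\<dots> = (- fps_X) ^ Suc (Suc j) * ((\<Prod>i<j. 1 - fps_X ^ (2 * i + 2)) * (1 - fps_X ^ (2 * j + 2)))"
    by (rule ring_aux3)
  also have "\<dots> = (- fps_X) ^ Suc (Suc j) * (\<Prod>i<Suc j. 1 - fps_X ^ (2 * i + 2))"
    by simp
  finally show ?case .
qed





theorem theorem3:
  fixes k :: nat
  assumes "1 \<le> k"
  shows "Abs_fps (\<lambda>n. if n = 0 then 0 else int (sptk_do k n)) =
           V k * fps_infprod (\<lambda>j. 1 + fps_X ^ (2 * j + 2))
         + W k * fps_infprod (\<lambda>j. 1 + fps_X ^ (2 * j + 1))
         + 2 * (- fps_X) ^ k * (\<Prod>j<k - 1. 1 - fps_X ^ (2 * j + 2))"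
proof (rule fps_ext)
  fix n
  obtain j where kj: "k = Suc j" using assms by (cases k) auto
  define M where "M = Suc n"
  define P2i :: "int fps" where "P2i = fps_infprod (\<lambda>j. 1 + fps_X ^ (2 * j + 2))"
  define P1i :: "int fps" where "P1i = fps_infprod (\<lambda>j. 1 + fps_X ^ (2 * j + 1))"
  have e2: "eqm (Suc n) P2i (P2 M)"
    unfolding eqm_def X_pow_dvd_iff
  proof (intro allI impI)
    fix i assume "i < Suc n"
    then have "i \<le> M" by (simp add: M_def)
    have "(\<Prod>j<M. 1 + fps_X ^ (2 * j + 2) :: int fps) $ i = fps_infprod (\<lambda>j. 1 + fps_X ^ (2 * j + 2)) $ i"
      by (rule infprod_coeff) (use \<open>i \<le> M\<close> in simp_all)
    then show "(P2i - P2 M) $ i = 0" unfolding P2_def P2i_def fps_sub_nth by simp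
  qed
  have e1: "eqm (Suc n) P1i (P1 (Suc M))"
    unfolding eqm_def X_pow_dvd_iff
  proof (intro allI impI)
    fix i assume "i < Suc n"
    then have "i \<le> Suc M" by (simp add: M_def)
    have "(\<Prod>j<Suc M. 1 + fps_X ^ (2 * j + 1) :: int fps) $ i = fps_infprod (\<lambda>j. 1 + fps_X ^ (2 * j + 1)) $ i"
      by (rule infprod_coeff) (use \<open>i \<le> Suc M\<close> in simp_all)
    then show "(P1i - P1 (Suc M)) $ i = 0" unfolding P1_def P1i_def fps_sub_nth by simp
  qed
  have cc: "2 * (- fps_X) ^ k * (\<Prod>j<k - 1. 1 - fps_X ^ (2 * j + 2)) = c k + c k"
    unfolding kj c_closed diff_Suc_1 by (simp only: mult_2 distrib_right)
  have r1: "eqm (Suc n) (V k * P2i + W k * P1i + (c k + c k)) (V k * P2 M + W k * P1 (Suc M) + (c k + c k))"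
    by (intro eqm_add eqm_mult e1 e2 eqm_refl)
  have r2: "eqm (2 * M) (Od k M + Ev k M) ((V k * P2 M + c k) + (W k * P1 (Suc M) + c k))"
    unfolding kj by (intro eqm_add Od_eqm Ev_eqm)
  have r2': "eqm (Suc n) (V k * P2 M + W k * P1 (Suc M) + (c k + c k)) (Od k M + Ev k M)"
  proof -
    have re: "V k * P2 M + W k * P1 (Suc M) + (c k + c k) = (V k * P2 M + c k) + (W k * P1 (Suc M) + c k)"
      by (simp add: algebra_simps)
    have le: "Suc n \<le> 2 * M" by (simp add: M_def)
    show ?thesis unfolding re by (rule eqm_sym, rule eqm_mono[OF r2 le])
  qed
  have "(V k * P2i + W k * P1i + (c k + c k)) $ n = (Od k M + Ev k M) $ n"
    by (rule eqm_nth[OF eqm_trans[OF r1 r2']]) simp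
  also have "\<dots> = int (card (Sigma {1..2 * M} (FF k n M)))"
    by (rule coeff_OdEv) (simp add: M_def)
  also have "\<dots> = (if n = 0 then 0 else int (sptk_do k n))"
  proof (cases "n = 0")
    case True
    have "FF k n M s = {}" if "s \<in> {1..2 * M}" for s
      using that assms True unfolding FF_def by auto
    then have "Sigma {1..2 * M} (FF k n M) = {}" by blast
    then show ?thesis using True by simp
  next
    case False
    have nM: "n \<le> 2 * M" by (simp add: M_def)
    have cs: "sptk_do k n = card (Sigma {1..2 * M} (FF k n M))" by (rule card_Spt[OF assms nM])
    show ?thesis using False unfolding cs by simp
  qed
  finally have calc: "(V k * P2i + W k * P1i + (c k + c k)) $ n = (if n = 0 then 0 else int (sptk_do k n))" .
  have L: "Abs_fps (\<lambda>n. if n = 0 then 0 else int (sptk_do k n)) $ n = (if n = 0 then 0 else int (sptk_do k n))"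
    by (rule fps_nth_Abs_fps)
  have R: "V k * fps_infprod (\<lambda>j. 1 + fps_X ^ (2 * j + 2))
         + W k * fps_infprod (\<lambda>j. 1 + fps_X ^ (2 * j + 1))
         + 2 * (- fps_X) ^ k * (\<Prod>j<k - 1. 1 - fps_X ^ (2 * j + 2)) = V k * P2i + W k * P1i + (c k + c k)"
    unfolding cc P2i_def P1i_def ..
  show "Abs_fps (\<lambda>n. if n = 0 then 0 else int (sptk_do k n)) $ n =
           (V k * fps_infprod (\<lambda>j. 1 + fps_X ^ (2 * j + 2))
         + W k * fps_infprod (\<lambda>j. 1 + fps_X ^ (2 * j + 1))
         + 2 * (- fps_X) ^ k * (\<Prod>j<k - 1. 1 - fps_X ^ (2 * j + 2))) $ n"
    unfolding L R using calc by (rule sym)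
qed


end
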